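(* Let $A\colon c_c\to c_c$, $(Ax)_1=x_1$, $(Ax)_n=x_n-x_{n-1}$ ($n>1$), and let $g\equiv 0$ on $c_c$ (so $g^*=\delta_{\{0\}}$ on $\ell^2$). Then the adjoint $A^*\colon\ell^2\to\ell^2$ is injective, the only $y\in\ell^2$ with $g^*(-A^*y)<\infty$ is $y=0$, and hence the Fenchel dual problem $$\sup_{y\in\ell^2}\left(-f^*(y)-g^*(-A^*y)\right)$$ has value $0$, attained at $y=0$. Since the primal problem $\inf_{x\in c_c}\left(f(Ax)+g(x)\right)$ has value $\pi^2/12$, this pair of problems has a positive duality gap $\pi^2/12>0$, although $f,g$ are convex, lower semicontinuous and $0\in\operatorname{core}(A\operatorname{dom} g-\operatorname{dom} f)$.
   Context: Let $c_c$ be the space of finitely supported real sequences with the $\ell^2$-norm; its dual is identified with $\ell^2$ via $\langle y,x\rangle=\sum_n y_nx_n$. Let $f\colon c_c\to\mathbb{R}$, $f(x)=\sum_{n=1}^\infty \frac{n^2}{2}(x_n-n^{-2})^2$. For $h\colon c_c\to(-\infty,\infty]$, $h^*(y)=\sup_{x\in c_c}(\langle y,x\rangle-h(x))$ for $y\in\ell^2$. The adjoint $A^*$ is defined by $\langle A^*y,x\rangle=\langle y,Ax\rangle$. $\delta_{\{0\}}$ is the indicator function of $\{0\}$, $\operatorname{dom}h=\{x:h(x)<\infty\}$, $\operatorname{core}$ denotes the algebraic interior. *)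

theory Defs
  imports "HOL-Analysis.Analysis"
begin

text \<open>Sequences are functions nat => real, indexed from 0: index n here is the
paper's index n+1.\<close>

definition cc :: "(nat \<Rightarrow> real) set" where
  "cc = {x. finite {n. x n \<noteq> 0}}"

definition l2 :: "(nat \<Rightarrow> real) set" where
  "l2 = {y. summable (\<lambda>n. (y n)\<^sup>2)}"

definition l2norm :: "(nat \<Rightarrow> real) \<Rightarrow> real" where
  "l2norm x = sqrt (\<Sum>n. (x n)\<^sup>2)"

definition pair :: "(nat \<Rightarrow> real) \<Rightarrow> (nat \<Rightarrow> real) \<Rightarrow> real" where
  "pair y x = (\<Sum>n. y n * x n)"

definition opA :: "(nat \<Rightarrow> real) \<Rightarrow> (nat \<Rightarrow> real)" where
  "opA x = (\<lambda>n. case n of 0 \<Rightarrow> x 0 | Suc m \<Rightarrow> x (Suc m) - x m)"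

definition fobj :: "(nat \<Rightarrow> real) \<Rightarrow> real" where
  "fobj x = (\<Sum>n. (real (Suc n))\<^sup>2 / 2 * (x n - 1 / (real (Suc n))\<^sup>2)\<^sup>2)"

definition fconj :: "((nat \<Rightarrow> real) \<Rightarrow> ereal) \<Rightarrow> (nat \<Rightarrow> real) \<Rightarrow> ereal" where
  "fconj h y = (SUP x\<in>cc. ereal (pair y x) - h x)"

definition adjA :: "(nat \<Rightarrow> real) \<Rightarrow> (nat \<Rightarrow> real)" where
  "adjA y = (THE z. z \<in> l2 \<and> (\<forall>x\<in>cc. pair z x = pair y (opA x)))"

definition edom :: "((nat \<Rightarrow> real) \<Rightarrow> ereal) \<Rightarrow> (nat \<Rightarrow> real) set" where
  "edom h = {x \<in> cc. h x < \<infinity>}"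

definition core :: "(nat \<Rightarrow> real) set \<Rightarrow> (nat \<Rightarrow> real) set" where
  "core S = {x \<in> cc. \<forall>d\<in>cc. \<exists>e>0. \<forall>t. 0 \<le> t \<and> t \<le> e \<longrightarrow> (\<lambda>n. x n + t * d n) \<in> S}"

definition convex_cc :: "((nat \<Rightarrow> real) \<Rightarrow> ereal) \<Rightarrow> bool" where
  "convex_cc h \<longleftrightarrow> (\<forall>x\<in>cc. \<forall>y\<in>cc. \<forall>t::real. 0 \<le> t \<and> t \<le> 1 \<longrightarrow>
      h (\<lambda>n. t * x n + (1 - t) * y n) \<le> ereal t * h x + ereal (1 - t) * h y)"

text \<open>Lower semicontinuity on c_c with respect to the l2 norm (sequential form,
equivalent in a metric space).\<close>
definition lsc_cc :: "((nat \<Rightarrow> real) \<Rightarrow> ereal) \<Rightarrow> bool" where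
  "lsc_cc h \<longleftrightarrow> (\<forall>x\<in>cc. \<forall>X. (\<forall>k. X k \<in> cc) \<and>
      (\<lambda>k. l2norm (\<lambda>n. X k n - x n)) \<longlonglongrightarrow> 0 \<longrightarrow> h x \<le> liminf (\<lambda>k. h (X k)))"

end

theory Submission
  imports Defs
begin


lemma cc_bound: assumes "x \<in> cc" shows "\<exists>N. \<forall>n\<ge>N. x n = 0"
proof -
  have "finite {n. x n \<noteq> 0}" using assms by (simp add: cc_def)
  then obtain N where "\<forall>n\<in>{n. x n \<noteq> 0}. n < N" using finite_nat_bounded by blast
  then show ?thesis by (metis leD mem_Collect_eq)
qed

lemma bound_cc: assumes "\<forall>n\<ge>N. x n = 0" shows "x \<in> cc"
proof -
  have "{n. x n \<noteq> 0} \<subseteq> {..<N}" using assms by (auto simp: not_less[symmetric])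
  then show ?thesis unfolding cc_def by (auto intro: finite_subset)
qed

definition cterm :: "nat \<Rightarrow> real" where "cterm n = 1 / (2 * (real (Suc n))\<^sup>2)"

lemma cterm_sums: "cterm sums (pi\<^sup>2 / 12)"
proof -
  have "(\<lambda>n. (1/2) * (1 / real ((n + 1)\<^sup>2))) sums ((1/2) * (pi\<^sup>2 / 6))"
    by (rule sums_mult[OF inverse_squares_sums])
  moreover have "(\<lambda>n. (1/2) * (1 / real ((n + 1)\<^sup>2))) = cterm"
    by (auto simp: cterm_def fun_eq_iff)
  ultimately show ?thesis by simp
qed

lemma term_split: "(real (Suc n))\<^sup>2 / 2 * (z - 1 / (real (Suc n))\<^sup>2)\<^sup>2
   = ((real (Suc n))\<^sup>2 * z\<^sup>2 / 2 - z) + cterm n"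
proof -
  have gen: "a\<^sup>2 / 2 * (z - 1 / a\<^sup>2)\<^sup>2 = (a\<^sup>2 * z\<^sup>2 / 2 - z) + 1 / (2 * a\<^sup>2)" if "a > 0" for a :: real
  proof -
    have "(z - 1 / a\<^sup>2) = (a\<^sup>2 * z - 1) / a\<^sup>2" using that by (simp add: field_simps)
    then have "a\<^sup>2 / 2 * (z - 1 / a\<^sup>2)\<^sup>2 = (a\<^sup>2 * z - 1)\<^sup>2 / (2 * a\<^sup>2)"
      using that by (simp add: power_divide power2_eq_square field_simps)
    also have "\<dots> = (a\<^sup>2 * z\<^sup>2 / 2 - z) + 1 / (2 * a\<^sup>2)"
      using that by (simp add: field_simps power2_eq_square)
    finally show ?thesis .
  qed
  show ?thesis unfolding cterm_def by (rule gen) simp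
qed

lemma fobj_sums:
  assumes "\<forall>n\<ge>N. z n = 0"
  shows "(\<lambda>n. (real (Suc n))\<^sup>2 / 2 * (z n - 1 / (real (Suc n))\<^sup>2)\<^sup>2) sums
     ((\<Sum>n<N. (real (Suc n))\<^sup>2 * (z n)\<^sup>2 / 2 - z n) + pi\<^sup>2 / 12)"
proof -
  have "(\<lambda>n. (real (Suc n))\<^sup>2 * (z n)\<^sup>2 / 2 - z n) sums (\<Sum>n\<in>{..<N}. (real (Suc n))\<^sup>2 * (z n)\<^sup>2 / 2 - z n)"
    by (rule sums_finite) (use assms in auto)
  then show ?thesis unfolding term_split by (rule sums_add[OF _ cterm_sums])
qed

lemma fobj_formula:
  assumes "\<forall>n\<ge>N. z n = 0"
  shows "fobj z = (\<Sum>n<N. (real (Suc n))\<^sup>2 * (z n)\<^sup>2 / 2 - z n) + pi\<^sup>2 / 12"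
  unfolding fobj_def using fobj_sums[OF assms] by (rule sums_unique[symmetric])

lemma fobj_summable: assumes "z \<in> cc"
  shows "summable (\<lambda>n. (real (Suc n))\<^sup>2 / 2 * (z n - 1 / (real (Suc n))\<^sup>2)\<^sup>2)"
  using cc_bound[OF assms] fobj_sums sums_summable by blast

lemma fobj_nonneg: assumes "z \<in> cc" shows "0 \<le> fobj z"
  unfolding fobj_def by (rule suminf_nonneg[OF fobj_summable[OF assms]]) simp

lemma fobj0: "fobj (\<lambda>n. 0) = pi\<^sup>2 / 12"
  using fobj_formula[of 0 "\<lambda>n. 0"] by simp

lemma zero_cc: "(\<lambda>n. 0) \<in> cc" by (simp add: cc_def)




definition adj0 :: "(nat \<Rightarrow> real) \<Rightarrow> (nat \<Rightarrow> real)" where "adj0 y = (\<lambda>k. y k - y (Suc k))"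

lemma pair_fin: assumes "\<forall>n\<ge>N. x n = 0" shows "pair y x = (\<Sum>n<N. y n * x n)"
  unfolding pair_def by (rule suminf_finite) (use assms in auto)

lemma opA_bound: assumes "\<forall>n\<ge>N. x n = 0" shows "\<forall>n\<ge>Suc N. opA x n = 0"
proof (intro allI impI)
  fix n assume "Suc N \<le> n"
  then obtain m where "n = Suc m" "N \<le> m" by (cases n) auto
  then show "opA x n = 0" using assms by (simp add: opA_def)
qed

lemma telescope: "(\<Sum>n<Suc N. y n * opA x n) = (\<Sum>n<N. (y n - y (Suc n)) * x n) + y N * x N"
  by (induction N) (auto simp: opA_def algebra_simps)

lemma pair_opA: assumes "x \<in> cc" shows "pair y (opA x) = pair (adj0 y) x"
proof -
  obtain N where N: "\<forall>n\<ge>N. x n = 0" using cc_bound[OF assms] by blast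
  have "pair y (opA x) = (\<Sum>n<Suc N. y n * opA x n)" by (rule pair_fin[OF opA_bound[OF N]])
  also have "\<dots> = (\<Sum>n<N. adj0 y n * x n)" by (simp only: telescope) (simp add: N adj0_def)
  also have "\<dots> = pair (adj0 y) x" by (rule pair_fin[OF N, symmetric])
  finally show ?thesis .
qed

lemma l2_diff: assumes "y \<in> l2" "z \<in> l2" shows "(\<lambda>n. y n - z n) \<in> l2"
proof -
  have S: "summable (\<lambda>n. 2 * (y n)\<^sup>2 + 2 * (z n)\<^sup>2)"
    using assms by (auto simp: l2_def intro: summable_add summable_mult)
  have B: "norm ((y n - z n)\<^sup>2) \<le> 2 * (y n)\<^sup>2 + 2 * (z n)\<^sup>2" for n
  proof -
    have "0 \<le> (y n + z n)\<^sup>2" by simp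
    then have "(y n - z n)\<^sup>2 \<le> 2 * (y n)\<^sup>2 + 2 * (z n)\<^sup>2" by (simp add: power2_eq_square algebra_simps)
    then show ?thesis by simp
  qed
  have "summable (\<lambda>n. (y n - z n)\<^sup>2)"
    by (rule summable_comparison_test[OF _ S]) (use B in blast)
  then show ?thesis unfolding l2_def by simp
qed

lemma adj0_l2: assumes "y \<in> l2" shows "adj0 y \<in> l2"
proof -
  have "(\<lambda>n. y (Suc n)) \<in> l2" using assms summable_Suc_iff[of "\<lambda>n. (y n)\<^sup>2"] by (simp add: l2_def)
  from l2_diff[OF assms this] show ?thesis by (simp add: adj0_def)
qed

definition unitv :: "nat \<Rightarrow> nat \<Rightarrow> real" where "unitv k = (\<lambda>n. if n = k then 1 else 0)"

lemma unitv_cc: "unitv k \<in> cc" by (rule bound_cc[of "Suc k"]) (simp add: unitv_def)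

lemma pair_unitv: "pair z (unitv k) = z k"
  using pair_fin[of "Suc k" "unitv k" z] by (simp add: unitv_def)

lemma adjA_eq: assumes "y \<in> l2" shows "adjA y = adj0 y"
  unfolding adjA_def
proof (rule the_equality)
  show "adj0 y \<in> l2 \<and> (\<forall>x\<in>cc. pair (adj0 y) x = pair y (opA x))"
    using adj0_l2[OF assms] pair_opA by simp
next
  fix z assume "z \<in> l2 \<and> (\<forall>x\<in>cc. pair z x = pair y (opA x))"
  then have "pair z (unitv k) = pair (adj0 y) (unitv k)" for k
    using pair_opA unitv_cc by metis
  then show "z = adj0 y" by (simp add: pair_unitv fun_eq_iff)
qed

lemma zero_l2: "(\<lambda>n. 0) \<in> l2" by (simp add: l2_def)

lemma adj0_inj: assumes "y \<in> l2" "z \<in> l2" "adj0 y = adj0 z" shows "y = z"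
proof -
  define c where "c = y 0 - z 0"
  have c: "y n - z n = c" for n
  proof (induction n)
    case 0 then show ?case by (simp add: c_def)
  next
    case (Suc n)
    have "y n - y (Suc n) = z n - z (Suc n)" using assms(3) by (simp add: adj0_def fun_eq_iff)
    then show ?case using Suc by simp
  qed
  have "summable (\<lambda>n. c\<^sup>2)" using l2_diff[OF assms(1,2)] by (simp add: l2_def c)
  then have "(\<lambda>n. c\<^sup>2) \<longlonglongrightarrow> 0" by (rule summable_LIMSEQ_zero)
  then have "c = 0" by (simp add: LIMSEQ_const_iff)
  then show ?thesis using c by (auto simp: fun_eq_iff)
qed




lemma pair_zero_left: "pair (\<lambda>n. 0) x = 0" by (simp add: pair_def)
lemma pair_zero_right: "pair y (\<lambda>n. 0) = 0" by (simp add: pair_def)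

lemma fconj_zero: "fconj (\<lambda>x. 0) y = (if y = (\<lambda>n. 0) then 0 else \<infinity>)"
proof (cases "y = (\<lambda>n. 0)")
  case True
  have "cc \<noteq> {}" using zero_cc by auto
  then show ?thesis using True by (simp add: fconj_def pair_zero_left)
next
  case False
  then obtain k where k: "y k \<noteq> 0" by auto
  have "(SUP x\<in>cc. ereal (pair y x) - 0) = \<infinity>"
  proof (rule SUP_PInfty)
    fix n :: nat
    define x where "x = (\<lambda>m. if m = k then real n / y k else 0)"
    have xb: "\<forall>m\<ge>Suc k. x m = 0" by (simp add: x_def)
    have "pair y x = (\<Sum>m<Suc k. y m * x m)" by (rule pair_fin[OF xb])
    also have "\<dots> = real n" using k by (simp add: x_def)
    finally have "pair y x = real n" .
    moreover have "x \<in> cc" by (rule bound_cc[OF xb])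
    ultimately show "\<exists>i\<in>cc. ereal (real n) \<le> ereal (pair y i) - 0" by force
  qed
  then show ?thesis using False by (simp add: fconj_def)
qed

lemma fconj_f_lower: "ereal (- (pi\<^sup>2 / 12)) \<le> fconj (\<lambda>x. ereal (fobj x)) y"
proof -
  have "ereal (pair y (\<lambda>n. 0)) - ereal (fobj (\<lambda>n. 0)) \<le> fconj (\<lambda>x. ereal (fobj x)) y"
    unfolding fconj_def by (rule SUP_upper[OF zero_cc])
  then show ?thesis by (simp add: pair_zero_right fobj0)
qed

lemma fconj_f_zero: "fconj (\<lambda>x. ereal (fobj x)) (\<lambda>n. 0) = 0"
proof (rule antisym)
  show "fconj (\<lambda>x. ereal (fobj x)) (\<lambda>n. 0) \<le> 0"
    unfolding fconj_def
    by (rule SUP_least) (simp add: pair_zero_left fobj_nonneg)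
next
  define xs where "xs N = (\<lambda>n. if n < N then 1 / (real (Suc n))\<^sup>2 else 0)" for N
  have xsb: "\<forall>n\<ge>N. xs N n = 0" for N by (simp add: xs_def)
  have tm: "(real (Suc n))\<^sup>2 * (1 / (real (Suc n))\<^sup>2)\<^sup>2 / 2 - 1 / (real (Suc n))\<^sup>2 = - cterm n" for n
  proof -
    have g: "b * (1 / b)\<^sup>2 / 2 - 1 / b = - (1 / (2 * b))" if "b > 0" for b :: real
      using that by (simp add: field_simps power2_eq_square)
    show ?thesis unfolding cterm_def by (rule g) simp
  qed
  have fx: "fobj (xs N) = pi\<^sup>2 / 12 - (\<Sum>n<N. cterm n)" for N
  proof -
    have "(\<Sum>n<N. (real (Suc n))\<^sup>2 * (xs N n)\<^sup>2 / 2 - xs N n) = (\<Sum>n<N. - cterm n)"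
    proof (rule sum.cong[OF refl])
      fix n assume "n \<in> {..<N}"
      then have "xs N n = 1 / (real (Suc n))\<^sup>2" by (simp add: xs_def)
      then show "(real (Suc n))\<^sup>2 * (xs N n)\<^sup>2 / 2 - xs N n = - cterm n" by (simp only: tm)
    qed
    then show ?thesis using fobj_formula[OF xsb, of N] by (simp add: sum_negf)
  qed
  have "(\<lambda>N. \<Sum>n<N. cterm n) \<longlonglongrightarrow> pi\<^sup>2 / 12" using cterm_sums by (simp add: sums_def)
  then have "(\<lambda>N. - fobj (xs N)) \<longlonglongrightarrow> 0"
    unfolding fx using tendsto_diff[OF _ tendsto_const[of "pi\<^sup>2 / 12"]] by force
  then have L: "(\<lambda>N. ereal (- fobj (xs N))) \<longlonglongrightarrow> ereal 0" by (rule tendsto_ereal)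
  show "0 \<le> fconj (\<lambda>x. ereal (fobj x)) (\<lambda>n. 0)"
    unfolding fconj_def
  proof (rule Sup_lim[OF _ L[simplified zero_ereal_def[symmetric]]])
    fix N show "ereal (- fobj (xs N)) \<in> (\<lambda>x. ereal (pair (\<lambda>n. 0) x) - ereal (fobj x)) ` cc"
      using bound_cc[OF xsb] by (auto simp: pair_zero_left intro!: image_eqI[where x="xs N"])
  qed
qed




lemma opA_sum: "(\<Sum>n<Suc N. opA x n) = x N"
  by (induction N) (auto simp: opA_def)

lemma opA_zero: "opA (\<lambda>n. 0) = (\<lambda>n. 0)"
  by (auto simp: opA_def fun_eq_iff split: nat.split)

lemma primal_lower: assumes "x \<in> cc" shows "pi\<^sup>2 / 12 \<le> fobj (opA x)"
proof -
  obtain N where N: "\<forall>n\<ge>N. x n = 0" using cc_bound[OF assms] by blast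
  have F: "fobj (opA x) = (\<Sum>n<Suc N. (real (Suc n))\<^sup>2 * (opA x n)\<^sup>2 / 2 - opA x n) + pi\<^sup>2 / 12"
    by (rule fobj_formula[OF opA_bound[OF N]])
  have "(\<Sum>n<Suc N. - opA x n) \<le> (\<Sum>n<Suc N. (real (Suc n))\<^sup>2 * (opA x n)\<^sup>2 / 2 - opA x n)"
    by (rule sum_mono) simp
  moreover have "(\<Sum>n<Suc N. - opA x n) = 0" by (simp only: sum_negf opA_sum) (simp add: N)
  ultimately show ?thesis using F by simp
qed

lemma primal: "(INF x\<in>cc. ereal (fobj (opA x)) + 0) = ereal (pi\<^sup>2 / 12)"
proof (rule antisym)
  show "(INF x\<in>cc. ereal (fobj (opA x)) + 0) \<le> ereal (pi\<^sup>2 / 12)"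
    using INF_lower[OF zero_cc, of "\<lambda>x. ereal (fobj (opA x)) + 0"] by (simp add: opA_zero fobj0)
next
  show "ereal (pi\<^sup>2 / 12) \<le> (INF x\<in>cc. ereal (fobj (opA x)) + 0)"
  proof (rule INF_greatest)
    fix x assume "x \<in> cc"
    then show "ereal (pi\<^sup>2 / 12) \<le> ereal (fobj (opA x)) + 0" using primal_lower[of x] by simp
  qed
qed

lemma quad_convex:
  fixes b t x y :: real assumes "0 \<le> b" "0 \<le> t" "t \<le> 1"
  shows "b * (t * x + (1 - t) * y)\<^sup>2 - (t * x + (1 - t) * y)
     \<le> t * (b * x\<^sup>2 - x) + (1 - t) * (b * y\<^sup>2 - y)"
proof -
  have e: "t * (b * x\<^sup>2 - x) + (1 - t) * (b * y\<^sup>2 - y)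
      - (b * (t * x + (1 - t) * y)\<^sup>2 - (t * x + (1 - t) * y)) = b * (t * (1 - t)) * (x - y)\<^sup>2"
    by (simp add: power2_eq_square algebra_simps)
  have "0 \<le> b * (t * (1 - t)) * (x - y)\<^sup>2" using assms by simp
  then show ?thesis using e by linarith
qed

lemma fobj_convex: "convex_cc (\<lambda>x. ereal (fobj x))"
  unfolding convex_cc_def
proof (intro ballI allI impI)
  fix x y t assume x: "x \<in> cc" and y: "y \<in> cc" and t: "0 \<le> t \<and> t \<le> (1::real)"
  obtain N1 where N1: "\<forall>n\<ge>N1. x n = 0" using cc_bound[OF x] by blast
  obtain N2 where N2: "\<forall>n\<ge>N2. y n = 0" using cc_bound[OF y] by blast
  define N where "N = max N1 N2"
  have xN: "\<forall>n\<ge>N. x n = 0" and yN: "\<forall>n\<ge>N. y n = 0" using N1 N2 by (auto simp: N_def)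
  have zN: "\<forall>n\<ge>N. t * x n + (1 - t) * y n = 0" using xN yN by simp
  define q where "q n w = ((real (Suc n))\<^sup>2 / 2) * w\<^sup>2 - w" for n w
  have "fobj (\<lambda>n. t * x n + (1 - t) * y n) = (\<Sum>n<N. q n (t * x n + (1 - t) * y n)) + pi\<^sup>2 / 12"
    using fobj_formula[OF zN] by (simp add: q_def)
  also have "\<dots> \<le> (\<Sum>n<N. t * q n (x n) + (1 - t) * q n (y n)) + pi\<^sup>2 / 12"
  proof -
    have qc: "q n (t * x n + (1 - t) * y n) \<le> t * q n (x n) + (1 - t) * q n (y n)" for n
      unfolding q_def by (rule quad_convex) (use t in auto)
    have "(\<Sum>n<N. q n (t * x n + (1 - t) * y n)) \<le> (\<Sum>n<N. t * q n (x n) + (1 - t) * q n (y n))"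
      by (rule sum_mono) (rule qc)
    then show ?thesis by (rule add_right_mono)
  qed
  also have "\<dots> = t * ((\<Sum>n<N. q n (x n)) + pi\<^sup>2 / 12) + (1 - t) * ((\<Sum>n<N. q n (y n)) + pi\<^sup>2 / 12)"
  proof -
    have S: "(\<Sum>n<N. t * q n (x n) + (1 - t) * q n (y n)) = t * (\<Sum>n<N. q n (x n)) + (1 - t) * (\<Sum>n<N. q n (y n))"
      by (simp only: sum.distrib sum_distrib_left)
    have g: "\<And>A B C. t * A + (1 - t) * B + C = t * (A + C) + (1 - t) * (B + C)"
      by (simp add: algebra_simps)
    show ?thesis unfolding S by (rule g)
  qed
  also have "\<dots> = t * fobj x + (1 - t) * fobj y"
    using fobj_formula[OF xN] fobj_formula[OF yN] by (simp add: q_def)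
  finally show "ereal (fobj (\<lambda>n. t * x n + (1 - t) * y n)) \<le> ereal t * ereal (fobj x) + ereal (1 - t) * ereal (fobj y)"
    by (simp only: times_ereal.simps(1) plus_ereal.simps(1) ereal_less_eq(3))
qed

lemma g_convex: "convex_cc (\<lambda>x. 0)" by (simp add: convex_cc_def)

lemma g_lsc: "lsc_cc (\<lambda>x. 0)" by (simp add: lsc_cc_def Liminf_const)

lemma diff_cc: assumes "x \<in> cc" "y \<in> cc" shows "(\<lambda>n. x n - y n) \<in> cc"
proof -
  obtain N1 where N1: "\<forall>n\<ge>N1. x n = 0" using cc_bound[OF assms(1)] by blast
  obtain N2 where N2: "\<forall>n\<ge>N2. y n = 0" using cc_bound[OF assms(2)] by blast
  show ?thesis by (rule bound_cc[of "max N1 N2"]) (use N1 N2 in auto)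
qed

lemma coord_bound: assumes "d \<in> cc" shows "\<bar>d n\<bar> \<le> l2norm d"
proof -
  obtain N where N: "\<forall>n\<ge>N. d n = 0" using cc_bound[OF assms] by blast
  have "summable (\<lambda>n. (d n)\<^sup>2)" by (rule summable_finite[of "{..<N}"]) (use N in auto)
  then have "sum (\<lambda>n. (d n)\<^sup>2) {n} \<le> (\<Sum>n. (d n)\<^sup>2)" by (rule sum_le_suminf) auto
  then have "sqrt ((d n)\<^sup>2) \<le> sqrt (\<Sum>n. (d n)\<^sup>2)" by (intro real_sqrt_le_mono) simp
  then show ?thesis by (simp add: l2norm_def)
qed

lemma fobj_lsc: "lsc_cc (\<lambda>x. ereal (fobj x))"
  unfolding lsc_cc_def
proof (intro ballI allI impI, elim conjE)
  fix x X assume x: "x \<in> cc" and X: "\<forall>k. X k \<in> cc"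
    and L: "(\<lambda>k. l2norm (\<lambda>n. X k n - x n)) \<longlonglongrightarrow> 0"
  define tm where "tm n w = (real (Suc n))\<^sup>2 / 2 * (w - 1 / (real (Suc n))\<^sup>2)\<^sup>2" for n w
  have coord: "(\<lambda>k. X k n) \<longlonglongrightarrow> x n" for n
  proof -
    have "(\<lambda>k. X k n - x n) \<longlonglongrightarrow> 0"
    proof (rule Lim_null_comparison[OF _ L])
      show "\<forall>\<^sub>F k in sequentially. norm (X k n - x n) \<le> l2norm (\<lambda>n. X k n - x n)"
        using coord_bound[OF diff_cc[OF X[rule_format] x]] by simp
    qed
    then show ?thesis by (rule LIM_zero_cancel)
  qed
  have SN: "(\<lambda>k. \<Sum>n<N. tm n (X k n)) \<longlonglongrightarrow> (\<Sum>n<N. tm n (x n))" for N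
    unfolding tm_def by (intro tendsto_intros coord)
  have le: "(\<Sum>n<N. tm n (z n)) \<le> fobj z" if "z \<in> cc" for z N
    unfolding fobj_def tm_def
    by (rule sum_le_suminf[OF fobj_summable[OF that]]) simp_all
  have lowN: "ereal (\<Sum>n<N. tm n (x n)) \<le> liminf (\<lambda>k. ereal (fobj (X k)))" for N
  proof -
    have "liminf (\<lambda>k. ereal (\<Sum>n<N. tm n (X k n))) = ereal (\<Sum>n<N. tm n (x n))"
      by (rule lim_imp_Liminf) (simp_all add: SN tendsto_ereal)
    moreover have "liminf (\<lambda>k. ereal (\<Sum>n<N. tm n (X k n))) \<le> liminf (\<lambda>k. ereal (fobj (X k)))"
      by (rule Liminf_mono) (use le[OF X[rule_format]] in simp)
    ultimately show ?thesis by simp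
  qed
  have "(\<lambda>N. \<Sum>n<N. tm n (x n)) \<longlonglongrightarrow> fobj x"
    unfolding fobj_def tm_def by (rule summable_LIMSEQ[OF fobj_summable[OF x]])
  then have "(\<lambda>N. ereal (\<Sum>n<N. tm n (x n))) \<longlonglongrightarrow> ereal (fobj x)" by (rule tendsto_ereal)
  then show "ereal (fobj x) \<le> liminf (\<lambda>k. ereal (fobj (X k)))"
    by (rule LIMSEQ_le_const2) (rule exI[of _ 0], intro allI impI, rule lowN)
qed




lemma core_part: "(\<lambda>n. 0) \<in> core {(\<lambda>n. opA u n - v n) | u v. u \<in> edom (\<lambda>x. 0) \<and> v \<in> edom (\<lambda>x. ereal (fobj x))}"
  unfolding core_def
proof (intro CollectI conjI ballI zero_cc)
  fix d assume d: "d \<in> cc"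
  obtain N where N: "\<forall>n\<ge>N. d n = 0" using cc_bound[OF d] by blast
  show "\<exists>e>0. \<forall>t. 0 \<le> t \<and> t \<le> e \<longrightarrow> (\<lambda>n. 0 + t * d n) \<in> {(\<lambda>n. opA u n - v n) | u v. u \<in> edom (\<lambda>x. 0) \<and> v \<in> edom (\<lambda>x. ereal (fobj x))}"
  proof (intro exI[of _ "1::real"] conjI allI impI)
    fix t :: real
    have vcc: "(\<lambda>n. - (t * d n)) \<in> cc" by (rule bound_cc[of N]) (use N in auto)
    show "(\<lambda>n. 0 + t * d n) \<in> {(\<lambda>n. opA u n - v n) | u v. u \<in> edom (\<lambda>x. 0) \<and> v \<in> edom (\<lambda>x. ereal (fobj x))}"
    proof -
      have e: "(\<lambda>n. 0 + t * d n) = (\<lambda>n. opA (\<lambda>n. 0) n - (\<lambda>n. - (t * d n)) n)" by (simp add: opA_zero)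
      have m: "(\<lambda>n. 0) \<in> edom (\<lambda>x. 0) \<and> (\<lambda>n. - (t * d n)) \<in> edom (\<lambda>x. ereal (fobj x))"
        using zero_cc vcc by (auto simp: edom_def)
      have "\<exists>u v. (\<lambda>n. 0 + t * d n) = (\<lambda>n. opA u n - v n) \<and> u \<in> edom (\<lambda>x. 0) \<and> v \<in> edom (\<lambda>x. ereal (fobj x))"
        by (rule exI[of _ "\<lambda>n. 0"], rule exI[of _ "\<lambda>n. - (t * d n)"]) (rule conjI[OF e m])
      then show ?thesis unfolding mem_Collect_eq .
    qed
  qed simp
qed




theorem mainTheorem12:
  fixes f g :: "(nat \<Rightarrow> real) \<Rightarrow> ereal"
  defines "f \<equiv> (\<lambda>x. ereal (fobj x))"
      and "g \<equiv> (\<lambda>x. 0)"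
  shows "(\<forall>y\<in>l2. fconj g y = (if y = (\<lambda>n. 0) then 0 else \<infinity>))
    \<and> (\<forall>y\<in>l2. adjA y \<in> l2 \<and> (\<forall>x\<in>cc. pair (adjA y) x = pair y (opA x)))
    \<and> inj_on adjA l2
    \<and> {y\<in>l2. fconj g (\<lambda>n. - adjA y n) < \<infinity>} = {\<lambda>n. 0}
    \<and> (SUP y\<in>l2. - fconj f y - fconj g (\<lambda>n. - adjA y n)) = 0
    \<and> - fconj f (\<lambda>n. 0) - fconj g (\<lambda>n. - adjA (\<lambda>n. 0) n) = 0
    \<and> (INF x\<in>cc. f (opA x) + g x) = ereal (pi\<^sup>2 / 12)
    \<and> (INF x\<in>cc. f (opA x) + g x) - (SUP y\<in>l2. - fconj f y - fconj g (\<lambda>n. - adjA y n))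
        = ereal (pi\<^sup>2 / 12)
    \<and> pi\<^sup>2 / 12 > 0
    \<and> convex_cc f \<and> convex_cc g \<and> lsc_cc f \<and> lsc_cc g
    \<and> (\<lambda>n. 0) \<in> core {(\<lambda>n. opA u n - v n) | u v. u \<in> edom g \<and> v \<in> edom f}"
proof -
  have P1: "\<forall>y\<in>l2. fconj g y = (if y = (\<lambda>n. 0) then 0 else \<infinity>)"
    unfolding g_def by (simp add: fconj_zero)
  have P2: "\<forall>y\<in>l2. adjA y \<in> l2 \<and> (\<forall>x\<in>cc. pair (adjA y) x = pair y (opA x))"
    using adjA_eq adj0_l2 pair_opA by simp
  have P3: "inj_on adjA l2"
  proof (rule inj_onI)
    fix y z assume "y \<in> l2" "z \<in> l2" "adjA y = adjA z"
    then show "y = z" using adj0_inj adjA_eq by metis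
  qed
  have adj00: "adj0 (\<lambda>n. 0) = (\<lambda>n. 0)" by (simp add: adj0_def)
  have gn: "fconj g (\<lambda>n. - adjA y n) = (if y = (\<lambda>n. 0) then 0 else \<infinity>)" if y: "y \<in> l2" for y
  proof -
    have "(\<lambda>n. - adjA y n) = (\<lambda>n. 0) \<longleftrightarrow> adj0 y = adj0 (\<lambda>n. 0)"
      using adjA_eq[OF y] adj00 by (auto simp: fun_eq_iff)
    also have "\<dots> \<longleftrightarrow> y = (\<lambda>n. 0)" using adj0_inj[OF y zero_l2] by auto
    finally show ?thesis unfolding g_def fconj_zero by simp
  qed
  have P4: "{y\<in>l2. fconj g (\<lambda>n. - adjA y n) < \<infinity>} = {\<lambda>n. 0}"
    using gn zero_l2 by (auto split: if_splits)
  have tm: "- fconj f y - fconj g (\<lambda>n. - adjA y n) = (if y = (\<lambda>n. 0) then 0 else -\<infinity>)"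
    if y: "y \<in> l2" for y
  proof (cases "y = (\<lambda>n. 0)")
    case True
    then show ?thesis using gn[OF y] fconj_f_zero unfolding f_def by simp
  next
    case False
    have lo: "ereal (- (pi\<^sup>2 / 12)) \<le> fconj f y" unfolding f_def by (rule fconj_f_lower)
    then have "fconj f y \<noteq> -\<infinity>" by auto
    then have "- fconj f y \<noteq> \<infinity>" by (metis ereal_uminus_uminus uminus_ereal.simps(2))
    then show ?thesis using gn[OF y] False by (cases "- fconj f y") auto
  qed
  have P5: "(SUP y\<in>l2. - fconj f y - fconj g (\<lambda>n. - adjA y n)) = 0"
  proof (rule antisym)
    show "(SUP y\<in>l2. - fconj f y - fconj g (\<lambda>n. - adjA y n)) \<le> 0"
      by (rule SUP_least) (simp add: tm)
    show "0 \<le> (SUP y\<in>l2. - fconj f y - fconj g (\<lambda>n. - adjA y n))"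
      using SUP_upper[OF zero_l2, of "\<lambda>y. - fconj f y - fconj g (\<lambda>n. - adjA y n)"] tm[OF zero_l2] by simp
  qed
  have P6: "- fconj f (\<lambda>n. 0) - fconj g (\<lambda>n. - adjA (\<lambda>n. 0) n) = 0"
    using tm[OF zero_l2] by simp
  have P7: "(INF x\<in>cc. f (opA x) + g x) = ereal (pi\<^sup>2 / 12)"
    unfolding f_def g_def by (rule primal)
  have P8: "(INF x\<in>cc. f (opA x) + g x) - (SUP y\<in>l2. - fconj f y - fconj g (\<lambda>n. - adjA y n))
        = ereal (pi\<^sup>2 / 12)" using P5 P7 by simp
  have P9: "pi\<^sup>2 / 12 > 0" by simp
  have P10: "convex_cc f \<and> convex_cc g \<and> lsc_cc f \<and> lsc_cc g"
    unfolding f_def g_def using fobj_convex g_convex fobj_lsc g_lsc by simp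
  have P11: "(\<lambda>n. 0) \<in> core {(\<lambda>n. opA u n - v n) | u v. u \<in> edom g \<and> v \<in> edom f}"
    unfolding f_def g_def by (rule core_part)
  show ?thesis using P1 P2 P3 P4 P5 P6 P7 P8 P9 P10 P11 by blast
qed


end
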